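(* For any positive integer $n$: (1) the set $\mathcal{B}^0_n$ of well-labelled positive paths $(\mathbf{p},\sigma)$ of size $n\ge2$ with $p_1=0$ is in bijection with $[n]\times\mathcal{B}_{n-1}$; (2) the set $\mathcal{B}'_n$ is in bijection with the set $\mathcal{A}_n$ of well-labelled Motzkin paths of size $n$; (3) the set $\mathcal{B}''_n$ is in bijection with the set $\mathcal{D}_n$ of ordered pairs $((I',P'),(I'',P''))$ such that $I'\subseteq[n]$, $I''=[n]\setminus I'$, $P'$ is a well-labelled Motzkin path of size $|I'|$ and $P''$ is a well-labelled positive path of size $|I''|$.
   Context: A well-labelled path of size $n$ is a pair $(\mathbf{p},\sigma)$ where $\mathbf{p}=p_1\ldots p_{n-1}$ is a word on $\{-1,0,+1\}$ and $\sigma$ is a permutation of $[n]$ such that $p_i=-1$ implies $\sigma_i<\sigma_{i+1}$ and $p_i=1$ implies $\sigma_i>\sigma_{i+1}$. It is Motzkin if $\sum_{i=1}^j p_i\ge0$ for all $j=1,\ldots,n-2$ and $\sum_{i=1}^{n-1}p_i=-1$; it is positive if $\sum_{i=1}^jp_i\ge0$ for all $j=1,\ldots,n-1$. $\mathcal{B}_m$ denotes the set of well-labelled positive paths of size $m$ ($\mathcal{B}_0=\emptyset$). Let $\mathcal{B}^1_n$ be the set of well-labelled positive paths of size $n\ge2$ with $p_1=1$. For $(\mathbf{p},\sigma)\in\mathcal{B}^1_n$ let $k$ be the greatest integer $k\le n$ such that $\sum_{i=1}^{j-1}p_i\ge1$ for all $j=2,\ldots,k-1$ and $\sum_{i=1}^{k-1}p_i=1$.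 Then $\mathcal{B}'_n$ is the set of paths in $\mathcal{B}^1_n$ with $k=n$, and $\mathcal{B}''_n=\mathcal{B}^1_n\setminus\mathcal{B}'_n$. *)

theory Defs
  imports Main
begin

text \<open>A path of size n is a pair (p, sigma): p is the word p_1 ... p_(n-1) as an int list
  (p_i = p ! (i-1)), sigma is the permutation of [n] = {1..n} in one-line notation
  as a nat list (sigma_i = sigma ! (i-1)).\<close>

type_synonym lpath = "int list \<times> nat list"

definition well_labelled :: "nat \<Rightarrow> lpath \<Rightarrow> bool" where
  "well_labelled n P \<longleftrightarrow> (case P of (p, \<sigma>) \<Rightarrow>
     n \<ge> 1 \<and> length p = n - 1 \<and> set p \<subseteq> {-1, 0, 1} \<and>
     length \<sigma> = n \<and> distinct \<sigma> \<and> set \<sigma> = {1..n} \<and>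
     (\<forall>i < n - 1. (p ! i = -1 \<longrightarrow> \<sigma> ! i < \<sigma> ! (i+1)) \<and>
                    (p ! i = 1 \<longrightarrow> \<sigma> ! i > \<sigma> ! (i+1))))"

definition psum :: "int list \<Rightarrow> nat \<Rightarrow> int" where
  "psum p j = sum_list (take j p)"

definition is_motzkin :: "nat \<Rightarrow> lpath \<Rightarrow> bool" where
  "is_motzkin n P \<longleftrightarrow> (\<forall>j \<in> {1..n-2}. psum (fst P) j \<ge> 0) \<and> psum (fst P) (n - 1) = -1"

definition is_positive :: "nat \<Rightarrow> lpath \<Rightarrow> bool" where
  "is_positive n P \<longleftrightarrow> (\<forall>j \<in> {1..n-1}. psum (fst P) j \<ge> 0)"

definition A_set :: "nat \<Rightarrow> lpath set" where
  "A_set n = {P. well_labelled n P \<and> is_motzkin n P}"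

text \<open>B_n: well-labelled positive paths of size n (B_0 is empty since size \<ge> 1 is required).\<close>
definition B_set :: "nat \<Rightarrow> lpath set" where
  "B_set n = {P. well_labelled n P \<and> is_positive n P}"

definition B0_set :: "nat \<Rightarrow> lpath set" where
  "B0_set n = {P \<in> B_set n. n \<ge> 2 \<and> fst P \<noteq> [] \<and> hd (fst P) = 0}"

definition B1_set :: "nat \<Rightarrow> lpath set" where
  "B1_set n = {P \<in> B_set n. n \<ge> 2 \<and> fst P \<noteq> [] \<and> hd (fst P) = 1}"

definition k_index :: "nat \<Rightarrow> int list \<Rightarrow> nat" where
  "k_index n p = (GREATEST k. k \<le> n \<and> (\<forall>j \<in> {2..k-1}. psum p (j-1) \<ge> 1) \<and> psum p (k-1) = 1)"

definition B'_set :: "nat \<Rightarrow> lpath set" where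
  "B'_set n = {P \<in> B1_set n. k_index n (fst P) = n}"

definition B''_set :: "nat \<Rightarrow> lpath set" where
  "B''_set n = B1_set n - B'_set n"

definition D_set :: "nat \<Rightarrow> ((nat set \<times> lpath) \<times> (nat set \<times> lpath)) set" where
  "D_set n = {((I', P'), (I'', P'')). I' \<subseteq> {1..n} \<and> I'' = {1..n} - I' \<and>
      P' \<in> A_set (card I') \<and> P'' \<in> B_set (card I'')}"

end

theory Submission
  imports Defs
begin


definition rel :: "int \<Rightarrow> nat \<Rightarrow> nat \<Rightarrow> bool" where
  "rel x a b \<longleftrightarrow> (x = -1 \<longrightarrow> a < b) \<and> (x = 1 \<longrightarrow> a > b)"

fun okc :: "int list \<Rightarrow> nat list \<Rightarrow> bool" where
  "okc [] _ = True"
| "okc (x#p) (a#b#s) = (rel x a b \<and> okc p (b#s))"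
| "okc _ _ = False"

lemma okc_idx: "length \<sigma> = length p + 1 \<Longrightarrow>
   okc p \<sigma> = (\<forall>i < length p. rel (p!i) (\<sigma>!i) (\<sigma>!(i+1)))"
proof (induction p arbitrary: \<sigma>)
  case Nil then show ?case by simp
next
  case (Cons x p)
  then obtain a b s where s: "\<sigma> = a#b#s"
    by (cases \<sigma>; cases "tl \<sigma>") auto
  have "okc (x#p) \<sigma> = (rel x a b \<and> okc p (b#s))" by (simp add: s)
  also have "okc p (b#s) = (\<forall>i < length p. rel (p!i) ((b#s)!i) ((b#s)!(i+1)))"
    using Cons s by simp
  also have "(rel x a b \<and> (\<forall>i < length p. rel (p!i) ((b#s)!i) ((b#s)!(i+1))))
     = (\<forall>i < length (x#p). rel ((x#p)!i) (\<sigma>!i) (\<sigma>!(i+1)))"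
    unfolding s using less_Suc_eq_0_disj by (auto simp: nth_Cons split: nat.splits)
  finally show ?case .
qed

lemma wl_okc: "well_labelled n (p,\<sigma>) \<longleftrightarrow> n \<ge> 1 \<and> length p = n - 1 \<and> set p \<subseteq> {-1,0,1} \<and>
   length \<sigma> = n \<and> distinct \<sigma> \<and> set \<sigma> = {1..n} \<and> okc p \<sigma>"
proof -
  have "length p = n - 1 \<Longrightarrow> length \<sigma> = n \<Longrightarrow> n \<ge> 1 \<Longrightarrow>
     okc p \<sigma> = (\<forall>i < n - 1. (p ! i = -1 \<longrightarrow> \<sigma> ! i < \<sigma> ! (i+1)) \<and>
                    (p ! i = 1 \<longrightarrow> \<sigma> ! i > \<sigma> ! (i+1)))"
    by (subst okc_idx) (auto simp: rel_def)
  then show ?thesis unfolding well_labelled_def by auto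
qed

lemma okc_snoc: "length S = length P + 1 \<Longrightarrow>
  okc (P @ [y]) (S @ [a]) = (okc P S \<and> rel y (last S) a)"
proof (induction P arbitrary: S)
  case Nil
  then obtain b where "S = [b]" by (cases S) auto
  then show ?case by simp
next
  case (Cons x P)
  then obtain a' b s where s: "S = a'#b#s"
    by (cases S; cases "tl S") auto
  show ?case using Cons.IH[of "b#s"] Cons.prems s by simp
qed

lemma okc_app: "length S = length P + 1 \<Longrightarrow>
  okc (P @ x # Q) (S @ b # T) = (okc P S \<and> rel x (last S) b \<and> okc Q (b#T))"
proof (induction P arbitrary: S)
  case Nil
  then obtain c where "S = [c]" by (cases S) auto
  then show ?case by simp
next
  case (Cons y P)
  then obtain a' c s where s: "S = a'#c#s"
    by (cases S; cases "tl S") auto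
  show ?case using Cons.IH[of "c#s"] Cons.prems s by simp
qed

lemma rel_neg: "rel (-x) b a = rel x a b"
  by (auto simp: rel_def)

lemma okc_rev: "length S = length P + 1 \<Longrightarrow>
  okc (map uminus (rev P)) (rev S) = okc P S"
proof (induction P arbitrary: S)
  case Nil
  then obtain b where "S = [b]" by (cases S) auto
  then show ?case by simp
next
  case (Cons x P)
  then obtain a b s where s: "S = a#b#s"
    by (cases S; cases "tl S") auto
  have "okc (map uminus (rev (x#P))) (rev S) =
        okc (map uminus (rev P) @ [-x]) (rev (b#s) @ [a])" by (simp add: s)
  also have "\<dots> = (okc (map uminus (rev P)) (rev (b#s)) \<and> rel (-x) (last (rev (b#s))) a)"
    using Cons.prems s by (intro okc_snoc) simp
  also have "\<dots> = (okc P (b#s) \<and> rel x a b)"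
    using Cons.IH[of "b#s"] Cons.prems s by (simp add: rel_neg)
  finally show ?case by (simp add: s conj_commute)
qed

lemma okc_map: "(\<And>x y. x \<in> set \<sigma> \<Longrightarrow> y \<in> set \<sigma> \<Longrightarrow> (h x < h y) = (x < y)) \<Longrightarrow>
   okc p (map h \<sigma>) = okc p \<sigma>"
  by (induction p \<sigma> rule: okc.induct) (auto simp: rel_def)

fun posf :: "int \<Rightarrow> int list \<Rightarrow> bool" where
  "posf c [] = True"
| "posf c (x#p) = (c + x \<ge> 0 \<and> posf (c+x) p)"

lemma psum_Cons_Suc: "psum (x#p) (Suc j) = x + psum p j"
  by (simp add: psum_def)

lemma posf_psum: "posf c p = (\<forall>j\<in>{1..length p}. c + psum p j \<ge> 0)"
proof (induction p arbitrary: c)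
  case Nil then show ?case by simp
next
  case (Cons x p)
  have "(\<forall>j\<in>{1..length (x#p)}. c + psum (x#p) j \<ge> 0) =
        (c + x \<ge> 0 \<and> (\<forall>j\<in>{1..length p}. (c + x) + psum p j \<ge> 0))"
  proof
    assume H: "\<forall>j\<in>{1..length (x#p)}. c + psum (x#p) j \<ge> 0"
    have "c + x \<ge> 0" using H[rule_format, of 1] by (simp add: psum_def)
    moreover have "\<forall>j\<in>{1..length p}. (c + x) + psum p j \<ge> 0"
      using H[rule_format, of "Suc _"] by (auto simp: psum_Cons_Suc algebra_simps)
    ultimately show "c + x \<ge> 0 \<and> (\<forall>j\<in>{1..length p}. (c + x) + psum p j \<ge> 0)" ..
  next
    assume H: "c + x \<ge> 0 \<and> (\<forall>j\<in>{1..length p}. (c + x) + psum p j \<ge> 0)"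
    show "\<forall>j\<in>{1..length (x#p)}. c + psum (x#p) j \<ge> 0"
    proof
      fix j assume j: "j \<in> {1..length (x#p)}"
      show "c + psum (x#p) j \<ge> 0"
      proof (cases j)
        case 0 then show ?thesis using j by simp
      next
        case (Suc j')
        show ?thesis
        proof (cases j')
          case 0 then show ?thesis using H Suc by (simp add: psum_def)
        next
          case (Suc j'')
          then show ?thesis using H j \<open>j = Suc j'\<close> by (auto simp: psum_Cons_Suc algebra_simps)
        qed
      qed
    qed
  qed
  then show ?case using Cons.IH by simp
qed

lemma posf_app: "posf c (p @ q) = (posf c p \<and> posf (c + sum_list p) q)"
  by (induction p arbitrary: c) (auto simp: algebra_simps)

lemma posf_sum: "posf c t \<Longrightarrow> c \<ge> 0 \<Longrightarrow> c + sum_list t \<ge> 0"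
proof (induction t arbitrary: c)
  case Nil then show ?case by simp
next
  case (Cons a t)
  then have "0 \<le> (c + a) + sum_list t" by simp
  then show ?case by (simp add: algebra_simps)
qed

lemma posf_mono: "posf c t \<Longrightarrow> c \<le> d \<Longrightarrow> posf d t"
  by (induction t arbitrary: c d) force+

lemma sum_uminus: "sum_list (map uminus xs) = - sum_list (xs :: int list)"
  by (induction xs) auto

lemma posf_rev: "c \<ge> 0 \<Longrightarrow> c + sum_list q \<ge> 0 \<Longrightarrow> posf c q \<Longrightarrow>
   posf (c + sum_list q) (map uminus (rev q))"
proof (induction q arbitrary: c)
  case Nil then show ?case by simp
next
  case (Cons x q)
  have IH: "posf (c + x + sum_list q) (map uminus (rev q))"
    using Cons.IH[of "c+x"] Cons.prems by (simp add: algebra_simps)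
  show ?case using IH Cons.prems
    by (simp add: posf_app sum_uminus algebra_simps)
qed

lemma exc_rev: "posf 0 q \<Longrightarrow> sum_list q = 0 \<Longrightarrow>
   posf 0 (map uminus (rev q)) \<and> sum_list (map uminus (rev q)) = 0"
  using posf_rev[of 0 q] by (simp add: sum_uminus)

lemma first_passage: "c \<ge> 0 \<Longrightarrow> \<not> posf c r \<Longrightarrow> set r \<subseteq> {-1,0,1} \<Longrightarrow>
  \<exists>t w. r = t @ (-1) # w \<and> posf c t \<and> c + sum_list t = 0"
proof (induction r arbitrary: c)
  case Nil then show ?case by simp
next
  case (Cons x r)
  show ?case
  proof (cases "c + x < 0")
    case True
    then have "c = 0" "x = -1" using Cons.prems by auto
    then show ?thesis by (intro exI[of _ "[]"] exI[of _ r]) simp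
  next
    case False
    then have "\<not> posf (c+x) r" using Cons.prems by simp
    with Cons.IH[of "c+x"] False Cons.prems obtain t w where
      "r = t @ (-1) # w" "posf (c+x) t" "c + x + sum_list t = 0" by auto
    then show ?thesis using False
      by (intro exI[of _ "x#t"] exI[of _ w]) (auto simp: algebra_simps)
  qed
qed

lemma last_passage: "posf 0 q \<Longrightarrow> sum_list q \<ge> 1 \<Longrightarrow> set q \<subseteq> {-1,0,1} \<Longrightarrow>
  \<exists>u r. q = u @ 1 # r \<and> posf 0 u \<and> sum_list u = 0 \<and> posf 0 r"
proof (induction q rule: rev_induct)
  case Nil then show ?case by simp
next
  case (snoc x q)
  have pq: "posf 0 q" and px: "sum_list q + x \<ge> 0" using snoc.prems by (auto simp: posf_app)
  have sq: "sum_list q \<ge> 0" using posf_sum[OF pq] by simp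
  show ?case
  proof (cases "sum_list q \<ge> 1")
    case True
    with snoc.IH pq snoc.prems obtain u r where
      ur: "q = u @ 1 # r" "posf 0 u" "sum_list u = 0" "posf 0 r" by auto
    then show ?thesis using snoc.prems
      by (intro exI[of _ u] exI[of _ "r @ [x]"]) (auto simp: posf_app algebra_simps)
  next
    case False
    then have "sum_list q = 0" "x = 1" using sq snoc.prems by auto
    then show ?thesis using pq by (intro exI[of _ q] exI[of _ "[]"]) auto
  qed
qed

lemma decomp: "posf 1 q \<Longrightarrow> \<not> (posf 0 q \<and> sum_list q = 0) \<Longrightarrow> set q \<subseteq> {-1,0,1} \<Longrightarrow>
  \<exists>u s r. q = u @ s # r \<and> posf 0 u \<and> sum_list u = 0 \<and> s \<in> {-1,1} \<and> posf 0 r"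
proof (cases "posf 0 q")
  case False
  assume a: "posf 1 q" "set q \<subseteq> {-1,0,1}"
  from first_passage[of 0 q] False a obtain t w where
    tw: "q = t @ (-1) # w" "posf 0 t" "sum_list t = 0" by auto
  have "posf 0 w" using a(1) tw by (simp add: posf_app)
  then show ?thesis using tw by blast
next
  case True
  assume a: "posf 1 q" "\<not> (posf 0 q \<and> sum_list q = 0)" "set q \<subseteq> {-1,0,1}"
  then have "sum_list q \<ge> 1" using posf_sum[OF True] True by auto
  from last_passage[OF True this a(3)] show ?thesis by blast
qed

lemma decomp_unique:
  assumes "u @ s # r = u' @ s' # r'"
    and "posf 0 u" "sum_list u = 0" "s \<in> {-1,1}" "posf 0 r"
    and "posf 0 u'" "sum_list u' = 0" "s' \<in> {-1,1}" "posf 0 r'"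
  shows "u = u'"
proof -
  have key: "False" if "u2 = u1 @ a # t" "r1 = t @ b # rr" "posf 0 u2" "sum_list u2 = 0"
    "sum_list u1 = 0" "a \<in> {-1,1}" "posf 0 r1"
    for u1 u2 a t b rr r1
  proof -
    have "posf 0 (u1 @ a # t)" using that by simp
    then have "a \<ge> 0" using that(5) by (simp add: posf_app)
    then have "a = 1" using that(6) by auto
    have "sum_list t = -1" using that \<open>a = 1\<close> by simp
    moreover have "posf 0 t" using that(2,7) by (simp add: posf_app)
    ultimately show False using posf_sum[of 0 t] by simp
  qed
  from assms(1) obtain us where
    "(u = u' @ us \<and> us @ s # r = s' # r') \<or> (u @ us = u' \<and> s # r = us @ s' # r')"
    by (auto simp: append_eq_append_conv2)
  then show ?thesis
  proof
    assume h: "u = u' @ us \<and> us @ s # r = s' # r'"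
    show ?thesis
    proof (cases us)
      case Nil then show ?thesis using h by simp
    next
      case (Cons c t)
      then have "u = u' @ s' # t" "r' = t @ s # r" using h by auto
      then show ?thesis using key[of u u' s' t r' s r] assms by auto
    qed
  next
    assume h: "u @ us = u' \<and> s # r = us @ s' # r'"
    show ?thesis
    proof (cases us)
      case Nil then show ?thesis using h by simp
    next
      case (Cons c t)
      then have "u' = u @ s # t" "r = t @ s' # r'" using h by auto
      then show ?thesis using key[of u' u s t r s' r'] assms by auto
    qed
  qed
qed



lemma B_char: "P \<in> B_set n \<longleftrightarrow> well_labelled n P \<and> posf 0 (fst P)"
proof -
  have "well_labelled n P \<Longrightarrow> is_positive n P = posf 0 (fst P)"
    unfolding is_positive_def posf_psum
    by (cases P) (simp add: well_labelled_def)
  then show ?thesis unfolding B_set_def by auto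
qed

lemma posf0_sum: "posf 0 q \<Longrightarrow> sum_list q \<ge> 0"
  using posf_sum[of 0 q] by simp

lemma psum_app_le: "j \<le> length q \<Longrightarrow> psum (q @ r) j = psum q j"
  by (simp add: psum_def)

lemma A_char: "(p,\<sigma>) \<in> A_set n \<longleftrightarrow> well_labelled n (p,\<sigma>) \<and>
   (\<exists>q. p = q @ [-1] \<and> posf 0 q \<and> sum_list q = 0)"
proof -
  have "is_motzkin n (p,\<sigma>) = (\<exists>q. p = q @ [-1] \<and> posf 0 q \<and> sum_list q = 0)"
    if wl: "well_labelled n (p,\<sigma>)"
  proof -
    have len: "length p = n - 1" "n \<ge> 1" "set p \<subseteq> {-1,0,1}" using wl by (auto simp: well_labelled_def)
    show ?thesis
    proof (cases "p = []")
      case True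
      then show ?thesis by (simp add: is_motzkin_def psum_def)
    next
      case False
      then obtain q x where px: "p = q @ [x]" by (cases p rule: rev_cases) auto
      have lq: "length q = n - 2" using len px by simp
      have x: "x \<in> {-1,0,1}" using len px by auto
      have m: "is_motzkin n (p,\<sigma>) = (posf 0 q \<and> sum_list q + x = -1)"
        unfolding is_motzkin_def posf_psum using lq len
        by (simp add: px psum_app_le, simp add: psum_def)
      show ?thesis
      proof
        assume "is_motzkin n (p,\<sigma>)"
        then have "posf 0 q" "sum_list q + x = -1" using m by auto
        moreover have "sum_list q \<ge> 0" using posf0_sum \<open>posf 0 q\<close> by simp
        ultimately show "\<exists>q. p = q @ [-1] \<and> posf 0 q \<and> sum_list q = 0"
          using x px by auto
      next
        assume "\<exists>q. p = q @ [-1] \<and> posf 0 q \<and> sum_list q = 0"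
        then obtain q' where "p = q' @ [-1]" "posf 0 q'" "sum_list q' = 0" by auto
        then show "is_motzkin n (p,\<sigma>)" using m px by auto
      qed
    qed
  qed
  then show ?thesis unfolding A_set_def by auto
qed

lemma B1_char: "(p,\<sigma>) \<in> B1_set n \<longleftrightarrow> well_labelled n (p,\<sigma>) \<and> n \<ge> 2 \<and>
   (\<exists>q. p = 1 # q \<and> posf 1 q)"
  unfolding B1_set_def B_char by (cases p) auto

definition KP :: "nat \<Rightarrow> int list \<Rightarrow> nat \<Rightarrow> bool" where
  "KP n p k \<longleftrightarrow> k \<le> n \<and> (\<forall>j \<in> {2..k-1}. psum p (j-1) \<ge> 1) \<and> psum p (k-1) = 1"

lemma KP_n: assumes "length q = n - 2" "n \<ge> 2"
  shows "KP n (1#q) n \<longleftrightarrow> posf 0 q \<and> sum_list q = 0"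
proof -
  have s: "psum (1#q) (Suc i) = 1 + psum q i" for i by (simp add: psum_Cons_Suc)
  have A: "(\<forall>j \<in> {2..n-1}. psum (1#q) (j-1) \<ge> 1) = (\<forall>i\<in>{1..n-3}. psum q i \<ge> 0)"
  proof
    assume H: "\<forall>j \<in> {2..n-1}. psum (1#q) (j-1) \<ge> 1"
    show "\<forall>i\<in>{1..n-3}. psum q i \<ge> 0"
    proof
      fix i assume "i \<in> {1..n-3}"
      then have "Suc (Suc i) \<in> {2..n-1}" by auto
      from H[rule_format, OF this] show "psum q i \<ge> 0" using s by simp
    qed
  next
    assume H: "\<forall>i\<in>{1..n-3}. psum q i \<ge> 0"
    show "\<forall>j \<in> {2..n-1}. psum (1#q) (j-1) \<ge> 1"
    proof
      fix j assume j: "j \<in> {2..n-1}"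
      then obtain i where i: "j = Suc (Suc i)" by (metis Suc_diff_le add_2_eq_Suc atLeastAtMost_iff diff_Suc_1 le_add_diff_inverse)
      show "psum (1#q) (j-1) \<ge> 1"
      proof (cases i)
        case 0 then show ?thesis using i by (simp add: psum_def)
      next
        case (Suc i')
        then have "i \<in> {1..n-3}" using i j by auto
        then show ?thesis using H i s by simp
      qed
    qed
  qed
  have B: "psum (1#q) (n-1) = 1 + sum_list q"
    using assms s[of "n-2"] by (simp add: psum_def)
  have C: "posf 0 q = (\<forall>i\<in>{1..n-2}. psum q i \<ge> 0)" using assms by (simp add: posf_psum)
  have D: "psum q (n-2) = sum_list q" using assms by (simp add: psum_def)
  have E: "{1..n-2} = {1..n-3} \<union> (if n \<ge> 3 then {n-2} else {})" using assms by auto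
  show ?thesis unfolding KP_def A B C E using D by auto
qed

lemma k_index_eq: assumes "length q = n - 2" "n \<ge> 2"
  shows "k_index n (1#q) = n \<longleftrightarrow> KP n (1#q) n"
proof
  have k_def: "k_index n (1#q) = (GREATEST k. KP n (1#q) k)"
    unfolding k_index_def KP_def ..
  have ex: "KP n (1#q) 2" using assms by (simp add: KP_def psum_def)
  have bd: "\<And>y. KP n (1#q) y \<Longrightarrow> y \<le> n" by (simp add: KP_def)
  {
    assume "k_index n (1#q) = n"
    then show "KP n (1#q) n" using GreatestI_nat[of "KP n (1#q)" 2 n, OF ex bd] k_def by simp
  }
  {
    assume "KP n (1#q) n"
    then show "k_index n (1#q) = n" unfolding k_def using bd
      by (intro Greatest_equality) auto
  }
qed

lemma B'_char: "(p,\<sigma>) \<in> B'_set n \<longleftrightarrow> well_labelled n (p,\<sigma>) \<and> n \<ge> 2 \<and>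
   (\<exists>q. p = 1 # q \<and> posf 0 q \<and> sum_list q = 0)"
proof -
  have "(p,\<sigma>) \<in> B'_set n \<longleftrightarrow> (p,\<sigma>) \<in> B1_set n \<and> k_index n p = n"
    unfolding B'_set_def by simp
  also have "\<dots> \<longleftrightarrow> well_labelled n (p,\<sigma>) \<and> n \<ge> 2 \<and>
   (\<exists>q. p = 1 # q \<and> posf 0 q \<and> sum_list q = 0)"
  proof
    assume H: "(p,\<sigma>) \<in> B1_set n \<and> k_index n p = n"
    then obtain q where q: "p = 1#q" "well_labelled n (p,\<sigma>)" "n \<ge> 2" by (auto simp: B1_char)
    then have "length q = n - 2" by (auto simp: wl_okc)
    then show "well_labelled n (p,\<sigma>) \<and> n \<ge> 2 \<and> (\<exists>q. p = 1 # q \<and> posf 0 q \<and> sum_list q = 0)"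
      using H q k_index_eq KP_n by auto
  next
    assume H: "well_labelled n (p,\<sigma>) \<and> n \<ge> 2 \<and> (\<exists>q. p = 1 # q \<and> posf 0 q \<and> sum_list q = 0)"
    then obtain q where q: "p = 1#q" "posf 0 q" "sum_list q = 0" by auto
    then have l: "length q = n - 2" using H by (auto simp: wl_okc)
    have "posf 1 q" using q posf_mono by auto
    then show "(p,\<sigma>) \<in> B1_set n \<and> k_index n p = n"
      using H q l k_index_eq KP_n by (auto simp: B1_char)
  qed
  finally show ?thesis .
qed

lemma B''_char: "(p,\<sigma>) \<in> B''_set n \<longleftrightarrow> well_labelled n (p,\<sigma>) \<and> n \<ge> 2 \<and>
   (\<exists>q. p = 1 # q \<and> posf 1 q \<and> \<not> (posf 0 q \<and> sum_list q = 0))"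
  unfolding B''_set_def using B'_char B1_char by auto



definition en :: "nat set \<Rightarrow> nat \<Rightarrow> nat" where
  "en I i = sorted_list_of_set I ! (i - 1)"

lemma en_less: assumes "i \<in> {1..card I}" "j \<in> {1..card I}"
  shows "(en I i < en I j) = (i < j)"
proof -
  have s: "sorted_wrt (<) (sorted_list_of_set I)" by (rule strict_sorted_list_of_set)
  have l: "length (sorted_list_of_set I) = card I" by simp
  have lt: "en I a < en I b" if "a \<in> {1..card I}" "b \<in> {1..card I}" "a < b" for a b
    unfolding en_def using sorted_wrt_nth_less[OF s, of "a-1" "b-1"] that l by auto
  show ?thesis
  proof
    assume "en I i < en I j"
    then show "i < j" using lt[of j i] assms by (metis less_asym linorder_neqE_nat)
  qed (use lt assms in auto)
qed

lemma en_inj: "inj_on (en I) {1..card I}"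
proof (rule inj_onI)
  fix x y assume xy: "x \<in> {1..card I}" "y \<in> {1..card I}" "en I x = en I y"
  show "x = y"
  proof (rule ccontr)
    assume "x \<noteq> y"
    then have "x < y \<or> y < x" by arith
    then show False using en_less[OF xy(1,2)] en_less[OF xy(2,1)] xy(3) by auto
  qed
qed

lemma en_image: assumes "finite I" shows "en I ` {1..card I} = I"
proof -
  have "en I ` {1..card I} = (\<lambda>i. sorted_list_of_set I ! i) ` {0..<card I}"
  proof -
    have eq: "{1..card I} = Suc ` {0..<card I}" by (simp add: image_Suc_atLeastLessThan atLeastLessThanSuc_atLeastAtMost)
    show ?thesis unfolding eq image_image en_def diff_Suc_1 by (rule refl)
  qed
  also have "\<dots> = set (sorted_list_of_set I)" by (auto simp: set_conv_nth)
  finally show ?thesis using assms by simp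
qed

lemma en_bij: "finite I \<Longrightarrow> bij_betw (en I) {1..card I} I"
  using en_inj en_image by (simp add: bij_betw_def)

lemma en_fwd:
  assumes "finite I" "distinct \<alpha>" "set \<alpha> = {1..card I}"
  shows "distinct (map (en I) \<alpha>) \<and> set (map (en I) \<alpha>) = I \<and>
         (\<forall>p. okc p (map (en I) \<alpha>) = okc p \<alpha>)"
proof -
  have "inj_on (en I) (set \<alpha>)" using en_inj assms by simp
  then have "distinct (map (en I) \<alpha>)" using assms by (simp add: distinct_map)
  moreover have "set (map (en I) \<alpha>) = I" using en_image assms by simp
  moreover have "okc p (map (en I) \<alpha>) = okc p \<alpha>" for p
    by (rule okc_map, rule en_less) (use assms(3) in auto)
  ultimately show ?thesis by blast
qed

lemma en_bwd:
  assumes "finite I" "distinct w" "set w = I"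
  defines "\<alpha> \<equiv> map (inv_into {1..card I} (en I)) w"
  shows "distinct \<alpha> \<and> set \<alpha> = {1..card I} \<and> map (en I) \<alpha> = w \<and> length \<alpha> = length w"
proof -
  have b: "bij_betw (inv_into {1..card I} (en I)) I {1..card I}"
    using en_bij[OF assms(1)] by (rule bij_betw_inv_into)
  have "map (en I) \<alpha> = w" unfolding \<alpha>_def map_map
  proof (rule map_idI)
    fix x assume "x \<in> set w"
    then have "x \<in> en I ` {1..card I}" using en_image[OF assms(1)] assms(3) by simp
    then show "(en I \<circ> inv_into {1..card I} (en I)) x = x" by (simp add: f_inv_into_f)
  qed
  moreover have "distinct \<alpha>" unfolding \<alpha>_def distinct_map using bij_betw_imp_inj_on[OF b] assms(2,3)
    by simp
  moreover have "set \<alpha> = {1..card I}" unfolding \<alpha>_def set_map using bij_betw_imp_surj_on[OF b] assms(3)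
    by simp
  ultimately show ?thesis by (simp add: \<alpha>_def)
qed

lemma map_en_inj: assumes "set a \<subseteq> {1..card I}" "set b \<subseteq> {1..card I}"
  "map (en I) a = map (en I) b" shows "a = b"
proof -
  have "set a \<union> set b \<subseteq> {1..card I}" using assms by simp
  then have "inj_on (en I) (set a \<union> set b)" using en_inj by (rule inj_on_subset[rotated])
  then show ?thesis using inj_on_map_eq_map assms(3) by blast
qed



lemma okc_cons0: "\<sigma>' \<noteq> [] \<Longrightarrow> okc (0#r) (i#\<sigma>') = okc r \<sigma>'"
  by (cases \<sigma>') (auto simp: rel_def)

lemma B0_char: "(p,\<sigma>) \<in> B0_set n \<longleftrightarrow> well_labelled n (p,\<sigma>) \<and> n \<ge> 2 \<and>
   (\<exists>r. p = 0 # r \<and> posf 0 r)"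
  unfolding B0_set_def B_char by (cases p) auto

definition F1 :: "nat \<Rightarrow> nat \<times> lpath \<Rightarrow> lpath" where
  "F1 n x = (case x of (i,(r,\<beta>)) \<Rightarrow> (0 # r, i # map (en ({1..n}-{i})) \<beta>))"

lemma card_J: "i \<in> {1..n} \<Longrightarrow> card ({1..n}-{i}) = n - 1"
  by simp

lemma part1: "bij_betw (F1 n) ({1..n} \<times> B_set (n - 1)) (B0_set n)"
  unfolding bij_betw_def
proof (intro conjI)
  show "inj_on (F1 n) ({1..n} \<times> B_set (n - 1))"
  proof (rule inj_onI)
    fix x y assume xy: "x \<in> {1..n} \<times> B_set (n - 1)" "y \<in> {1..n} \<times> B_set (n - 1)" "F1 n x = F1 n y"
    obtain i r \<beta> where x: "x = (i,r,\<beta>)" by (metis prod_cases3)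
    obtain i' r' \<beta>' where y: "y = (i',r',\<beta>')" by (metis prod_cases3)
    have a: "i \<in> {1..n}" "(r,\<beta>) \<in> B_set (n-1)" "i' \<in> {1..n}" "(r',\<beta>') \<in> B_set (n-1)"
      and e: "F1 n (i,r,\<beta>) = F1 n (i',r',\<beta>')" using xy x y by auto
    then have ii: "i = i'" "r = r'" and m: "map (en ({1..n}-{i})) \<beta> = map (en ({1..n}-{i})) \<beta>'"
      by (auto simp: F1_def)
    have "set \<beta> = {1..n-1}" "set \<beta>' = {1..n-1}" using a by (auto simp: B_char wl_okc)
    then have "\<beta> = \<beta>'" using map_en_inj[OF _ _ m] card_J[OF a(1)] by simp
    then show "x = y" using ii x y by simp
  qed
next
  show "F1 n ` ({1..n} \<times> B_set (n - 1)) = B0_set n"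
  proof
    show "F1 n ` ({1..n} \<times> B_set (n - 1)) \<subseteq> B0_set n"
    proof (rule image_subsetI)
      fix x assume x: "x \<in> {1..n} \<times> B_set (n - 1)"
      obtain i r \<beta> where xe: "x = (i,r,\<beta>)" by (metis prod_cases3)
      have a: "i \<in> {1..n}" "(r,\<beta>) \<in> B_set (n-1)" using x xe by auto
      define J where "J = {1..n}-{i}"
      have cJ: "card J = n - 1" "finite J" using card_J[OF a(1)] by (auto simp: J_def)
      from a have wl: "n - 1 \<ge> 1" "length r = n - 2" "set r \<subseteq> {-1,0,1}" "length \<beta> = n - 1"
        "distinct \<beta>" "set \<beta> = {1..n-1}" "okc r \<beta>" "posf 0 r"
        by (auto simp: B_char wl_okc)
      have f: "distinct (map (en J) \<beta>) \<and> set (map (en J) \<beta>) = J \<and>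
         (\<forall>p. okc p (map (en J) \<beta>) = okc p \<beta>)" using en_fwd[OF cJ(2) wl(5)] wl(6) cJ(1) by simp
      have ne: "map (en J) \<beta> \<noteq> []" using wl by auto
      have "i \<notin> J" "insert i J = {1..n}" using a by (auto simp: J_def)
      then have W: "well_labelled n (0 # r, i # map (en J) \<beta>)"
        unfolding wl_okc using wl f ne okc_cons0 by auto
      have n2: "n \<ge> 2" using wl(1) by simp
      have "(0 # r, i # map (en J) \<beta>) \<in> B0_set n" unfolding B0_char using W n2 wl(8) by blast
      moreover have "F1 n (i, r, \<beta>) = (0 # r, i # map (en J) \<beta>)" by (simp add: F1_def J_def)
      ultimately show "F1 n x \<in> B0_set n" using xe by simp
    qed
  next
    show "B0_set n \<subseteq> F1 n ` ({1..n} \<times> B_set (n - 1))"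
    proof clarify
      fix p \<sigma> assume "(p,\<sigma>) \<in> B0_set n"
      then obtain r where h: "well_labelled n (p,\<sigma>)" "n \<ge> 2" "p = 0 # r" "posf 0 r"
        unfolding B0_char by blast
      then have wl: "length r = n - 2" "set r \<subseteq> {-1,0,1}" "length \<sigma> = n"
        "distinct \<sigma>" "set \<sigma> = {1..n}" "okc (0#r) \<sigma>" by (auto simp: wl_okc)
      then obtain i w where s: "\<sigma> = i # w" using h by (cases \<sigma>) auto
      have i: "i \<in> {1..n}" using wl s by auto
      define J where "J = {1..n}-{i}"
      have cJ: "card J = n - 1" "finite J" using card_J[OF i] by (auto simp: J_def)
      have w: "distinct w" "set w = J" using wl s by (auto simp: J_def)
      define \<beta> where "\<beta> = map (inv_into {1..card J} (en J)) w"
      have b: "distinct \<beta> \<and> set \<beta> = {1..card J} \<and> map (en J) \<beta> = w \<and> length \<beta> = length w"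
        using en_bwd[OF cJ(2) w] unfolding \<beta>_def by blast
      have ne: "w \<noteq> []" using wl s h by auto
      have "okc r w" using wl(6) s okc_cons0[OF ne] by simp
      then have "okc r \<beta>" using en_fwd[OF cJ(2), of \<beta>] b by auto
      moreover have "length \<beta> = n - 1" using b wl(3) s by simp
      moreover have "set \<beta> = {1..n-1}" using b cJ by simp
      moreover have "n - 1 \<ge> 1" "length r = n - 1 - 1" using h(2) wl(1) by auto
      ultimately have "(r,\<beta>) \<in> B_set (n-1)" unfolding B_char wl_okc fst_conv
        using wl(2) b h(4) by blast
      moreover have "F1 n (i, r, \<beta>) = (p,\<sigma>)" using b h(3) s unfolding F1_def by (simp add: J_def)
      ultimately show "(p,\<sigma>) \<in> F1 n ` ({1..n} \<times> B_set (n - 1))" using i by force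
    qed
  qed
qed



lemma okc_cons: "S \<noteq> [] \<Longrightarrow> okc (x#Q) (z#S) = (rel x z (hd S) \<and> okc Q S)"
  by (cases S) auto

lemma neg_neg_rev: "map uminus (rev (map uminus (rev (q::int list)))) = q"
  by (simp add: rev_map map_map o_def)

definition F2 :: "lpath \<Rightarrow> lpath" where
  "F2 P = (1 # map uminus (rev (butlast (fst P))), last (snd P) # rev (butlast (snd P)))"

lemma part2: "bij_betw F2 (A_set n) (B'_set n)"
  unfolding bij_betw_def
proof (intro conjI)
  show "inj_on F2 (A_set n)"
  proof (rule inj_onI)
    fix x y assume xy: "x \<in> A_set n" "y \<in> A_set n" "F2 x = F2 y"
    obtain p \<sigma> where x: "x = (p,\<sigma>)" by (cases x)
    obtain p' \<sigma>' where y: "y = (p',\<sigma>')" by (cases y)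
    have a: "(p,\<sigma>) \<in> A_set n" "(p',\<sigma>') \<in> A_set n" and e: "F2 (p,\<sigma>) = F2 (p',\<sigma>')"
      using xy x y by auto
    obtain q where q: "p = q @ [-1]" using a(1) by (auto simp: A_char)
    obtain q' where q': "p' = q' @ [-1]" using a(2) by (auto simp: A_char)
    have "map uminus (rev q) = map uminus (rev q')" using e q q' by (simp add: F2_def)
    then have "q = q'" by (metis neg_neg_rev)
    moreover have ne: "\<sigma> \<noteq> []" "\<sigma>' \<noteq> []" using a by (auto simp: A_char wl_okc)
    moreover have "last \<sigma> = last \<sigma>'" "butlast \<sigma> = butlast \<sigma>'" using e by (auto simp: F2_def)
    ultimately have "p = p' \<and> \<sigma> = \<sigma>'" using q q' by (metis append_butlast_last_id)
    then show "x = y" using x y by simp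
  qed
next
  show "F2 ` A_set n = B'_set n"
  proof
    show "F2 ` A_set n \<subseteq> B'_set n"
    proof (rule image_subsetI)
      fix x assume x: "x \<in> A_set n"
      obtain p \<sigma> where xp: "x = (p,\<sigma>)" by (cases x)
      have "(p,\<sigma>) \<in> A_set n" using x xp by simp
      then obtain q where h: "well_labelled n (p,\<sigma>)" "p = q @ [-1]" "posf 0 q" "sum_list q = 0"
        by (auto simp: A_char)
      then have wl: "length q = n - 2" "n \<ge> 2" "set q \<subseteq> {-1,0,1}" "length \<sigma> = n"
        "distinct \<sigma>" "set \<sigma> = {1..n}" "okc (q@[-1]) \<sigma>" by (auto simp: wl_okc)
      then obtain a z where s: "\<sigma> = a @ [z]" by (cases \<sigma> rule: rev_cases) auto
      have la: "length a = length q + 1" using wl s by simp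
      have o: "okc q a" "rel (-1) (last a) z" using okc_snoc[OF la] wl(7) s by auto
      have ne: "rev a \<noteq> []" using la by auto
      have "okc (map uminus (rev q)) (rev a)" using okc_rev[OF la] o by simp
      moreover have "rel 1 z (hd (rev a))" using o(2) rel_neg[of "-1" z "last a"] ne
        by (simp add: hd_rev)
      ultimately have ok: "okc (1 # map uminus (rev q)) (z # rev a)" using okc_cons[OF ne] by simp
      have F: "F2 (p,\<sigma>) = (1 # map uminus (rev q), z # rev a)" using h s by (simp add: F2_def)
      have "well_labelled n (1 # map uminus (rev q), z # rev a)" unfolding wl_okc
        using wl s ok by auto
      then show "F2 x \<in> B'_set n" unfolding xp F B'_char using exc_rev[OF h(3,4)] wl by blast
    qed
  next
    show "B'_set n \<subseteq> F2 ` A_set n"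
    proof clarify
      fix p \<sigma> assume "(p,\<sigma>) \<in> B'_set n"
      then obtain q where h: "well_labelled n (p,\<sigma>)" "n \<ge> 2" "p = 1 # q" "posf 0 q" "sum_list q = 0"
        by (auto simp: B'_char)
      then have wl: "length q = n - 2" "set q \<subseteq> {-1,0,1}" "length \<sigma> = n"
        "distinct \<sigma>" "set \<sigma> = {1..n}" "okc (1#q) \<sigma>" by (auto simp: wl_okc)
      then obtain z b where s: "\<sigma> = z # b" using h by (cases \<sigma>) auto
      have ne: "b \<noteq> []" using wl s h by auto
      have lb: "length b = length q + 1" using wl s h by simp
      have o: "rel 1 z (hd b)" "okc q b" using okc_cons[OF ne] wl(6) s by auto
      define Q where "Q = map uminus (rev q)"
      have lb2: "length (rev b) = length Q + 1" using lb by (simp add: Q_def)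
      have "okc Q (rev b)" using okc_rev[OF lb] o by (simp add: Q_def)
      moreover have "rel (-1) (last (rev b)) z" using o(1) rel_neg[of "-1" z "hd b"] ne
        by (simp add: last_rev)
      ultimately have ok: "okc (Q @ [-1]) (rev b @ [z])" using okc_snoc[OF lb2] by simp
      have "well_labelled n (Q @ [-1], rev b @ [z])" unfolding wl_okc
        using wl s ok h by (auto simp: Q_def)
      then have "(Q @ [-1], rev b @ [z]) \<in> A_set n" unfolding A_char
        using exc_rev[OF h(4,5)] by (auto simp: Q_def)
      moreover have "F2 (Q @ [-1], rev b @ [z]) = (p,\<sigma>)"
        using h s by (simp add: F2_def Q_def neg_neg_rev)
      ultimately show "(p,\<sigma>) \<in> F2 ` A_set n" by force
    qed
  qed
qed



definition F3 :: "(nat set \<times> lpath) \<times> (nat set \<times> lpath) \<Rightarrow> lpath" where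
  "F3 x = (case x of ((I',(m,\<alpha>)),(I'',(r,\<beta>))) \<Rightarrow>
     let A = map (en I') \<alpha>; B = map (en I'') \<beta>; q = butlast m; a = butlast A; z = last A;
         s = (if hd a < hd B then -1 else 1)
     in (1 # map uminus (rev q) @ s # r, z # rev a @ B))"

lemma D_char: "((I',(m,\<alpha>)),(I'',(r,\<beta>))) \<in> D_set n \<longleftrightarrow>
   I' \<subseteq> {1..n} \<and> I'' = {1..n} - I' \<and> (m,\<alpha>) \<in> A_set (card I') \<and> (r,\<beta>) \<in> B_set (card I'')"
  unfolding D_set_def by simp

lemma F3_into:
  assumes "((I',(m,\<alpha>)),(I'',(r,\<beta>))) \<in> D_set n"
  shows "F3 ((I',(m,\<alpha>)),(I'',(r,\<beta>))) \<in> B''_set n"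
proof -
  define k where "k = card I'"
  define k' where "k' = card I''"
  have D: "I' \<subseteq> {1..n}" "I'' = {1..n} - I'" "(m,\<alpha>) \<in> A_set k" "(r,\<beta>) \<in> B_set k'"
    using assms by (auto simp: D_char k_def k'_def)
  have fin: "finite I'" "finite I''" using D finite_subset by auto
  have kk: "k + k' = n" using D fin card_Diff_subset[of I' "{1..n}"] card_mono[of "{1..n}" I']
    by (simp add: k_def k'_def)
  obtain q where A1: "well_labelled k (m,\<alpha>)" "m = q @ [-1]" "posf 0 q" "sum_list q = 0"
    using D(3) by (auto simp: A_char)
  have Aw: "length q = k - 2" "k \<ge> 2" "set q \<subseteq> {-1,0,1}" "length \<alpha> = k" "distinct \<alpha>"
     "set \<alpha> = {1..k}" "okc (q @ [-1]) \<alpha>" using A1 by (auto simp: wl_okc)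
  have Bw: "k' \<ge> 1" "length r = k' - 1" "set r \<subseteq> {-1,0,1}" "length \<beta> = k'" "distinct \<beta>"
     "set \<beta> = {1..k'}" "okc r \<beta>" "posf 0 r" using D(4) by (auto simp: B_char wl_okc)
  define A where "A = map (en I') \<alpha>"
  define B where "B = map (en I'') \<beta>"
  have fA: "distinct A" "set A = I'" "okc (q @ [-1]) A"
    using en_fwd[OF fin(1) Aw(5)] Aw(6,7) unfolding A_def k_def by auto
  have fB: "distinct B" "set B = I''" "okc r B"
    using en_fwd[OF fin(2) Bw(5)] Bw(6,7) unfolding B_def k'_def by auto
  have lA: "length A = k" "length B = k'" using Aw Bw by (auto simp: A_def B_def)
  obtain a z where az: "A = a @ [z]" using lA Aw by (cases A rule: rev_cases) auto
  have la: "length a = length q + 1" using az lA Aw by simp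
  obtain c t where ct: "B = c # t" using lA Bw by (cases B) auto
  define Q where "Q = map uminus (rev q)"
  define s where "s = (if hd a < hd B then -1 else (1::int))"
  have F: "F3 ((I',(m,\<alpha>)),(I'',(r,\<beta>))) = (1 # Q @ s # r, z # rev a @ B)"
  proof -
    have az': "map (en I') \<alpha> = a @ [z]" using az A_def by simp
    show ?thesis unfolding F3_def Let_def using A1(2) az' by (simp add: Q_def s_def B_def)
  qed
  have oa: "okc q a" "rel (-1) (last a) z" using okc_snoc[OF la] fA(3) az by auto
  have ane: "a \<noteq> []" using la by auto
  have disj: "set A \<inter> set B = {}" using fA fB D by auto
  have s1: "s \<in> {-1,1}" by (simp add: s_def)
  have rs: "rel s (hd a) c"
  proof -
    have "hd a \<in> set A" "c \<in> set B" using ane az ct by auto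
    then have "hd a \<noteq> c" using disj by auto
    then show ?thesis by (auto simp: s_def rel_def ct)
  qed
  have lra: "length (rev a) = length Q + 1" using la by (simp add: Q_def)
  have ok: "okc (1 # Q @ s # r) (z # rev a @ B)"
  proof -
    have "rev a @ B \<noteq> []" using ane by simp
    moreover have "hd (rev a @ B) = last a" using ane by (simp add: hd_rev)
    moreover have "okc (Q @ s # r) (rev a @ c # t) = (okc Q (rev a) \<and> rel s (last (rev a)) c \<and> okc r (c#t))"
      by (rule okc_app[OF lra])
    moreover have "okc Q (rev a)" using okc_rev[OF la] oa by (simp add: Q_def)
    moreover have "rel 1 z (last a)" using oa(2) rel_neg[of "-1" z "last a"] by simp
    ultimately show ?thesis using okc_cons rs fB(3) ct ane by (simp add: last_rev)
  qed
  have wl: "well_labelled n (1 # Q @ s # r, z # rev a @ B)" unfolding wl_okc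
  proof (intro conjI)
    show "length (1 # Q @ s # r) = n - 1" using Aw Bw kk by (simp add: Q_def)
    show "set (1 # Q @ s # r) \<subseteq> {-1,0,1}" using Aw Bw s1 by (auto simp: Q_def)
    show "length (z # rev a @ B) = n" using la lA Aw kk by simp
    show "distinct (z # rev a @ B)" using fA fB disj az by auto
    show "set (z # rev a @ B) = {1..n}" using fA fB az D by auto
  qed (use kk Aw ok in auto)
  have p1: "posf 1 (Q @ s # r)"
  proof -
    have "posf 0 Q" "sum_list Q = 0" using exc_rev[OF A1(3,4)] by (auto simp: Q_def)
    then show ?thesis using s1 Bw(8) posf_mono[of 0 Q 1] posf_mono[of 0 r "1+s"]
      by (auto simp: posf_app)
  qed
  have p2: "\<not> (posf 0 (Q @ s # r) \<and> sum_list (Q @ s # r) = 0)"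
  proof
    assume h: "posf 0 (Q @ s # r) \<and> sum_list (Q @ s # r) = 0"
    have sQ: "sum_list Q = 0" using A1(4) by (simp add: Q_def sum_uminus)
    then have "s \<ge> 0" using h by (simp add: posf_app)
    then have "s = 1" using s1 by auto
    then show False using h sQ posf0_sum[OF Bw(8)] by simp
  qed
  show ?thesis unfolding F B''_char using wl p1 p2 Aw kk by auto
qed



lemma F3_facts:
  assumes "((I',(m,\<alpha>)),(I'',(r,\<beta>))) \<in> D_set n"
  shows "\<exists>q a z s. m = q @ [-1] \<and> posf 0 (map uminus (rev q)) \<and> sum_list (map uminus (rev q)) = 0
     \<and> s \<in> {-1,1} \<and> posf 0 r \<and> map (en I') \<alpha> = a @ [z] \<and> length a = length q + 1
     \<and> set \<alpha> = {1..card I'} \<and> set \<beta> = {1..card I''} \<and> I' = set (a @ [z]) \<and> I'' = {1..n} - I'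
     \<and> F3 ((I',(m,\<alpha>)),(I'',(r,\<beta>))) = (1 # map uminus (rev q) @ s # r, z # rev a @ map (en I'') \<beta>)"
proof -
  have D: "I' \<subseteq> {1..n}" "I'' = {1..n} - I'" "(m,\<alpha>) \<in> A_set (card I')" "(r,\<beta>) \<in> B_set (card I'')"
    using assms by (auto simp: D_char)
  have fin: "finite I'" using D finite_subset by auto
  obtain q where A1: "well_labelled (card I') (m,\<alpha>)" "m = q @ [-1]" "posf 0 q" "sum_list q = 0"
    using D(3) by (auto simp: A_char)
  have Aw: "length q = card I' - 2" "card I' \<ge> 2" "length \<alpha> = card I'" "distinct \<alpha>"
     "set \<alpha> = {1..card I'}" using A1 by (auto simp: wl_okc)
  have Bw: "set \<beta> = {1..card I''}" "posf 0 r" using D(4) by (auto simp: B_char wl_okc)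
  define A where "A = map (en I') \<alpha>"
  have fA: "set A = I'" using en_fwd[OF fin Aw(4)] Aw(5) unfolding A_def by auto
  have lA: "length A = card I'" using Aw by (auto simp: A_def)
  obtain a z where az: "A = a @ [z]" using lA Aw by (cases A rule: rev_cases) auto
  have la: "length a = length q + 1" using az lA Aw by simp
  define s where "s = (if hd a < hd (map (en I'') \<beta>) then -1 else (1::int))"
  have az': "map (en I') \<alpha> = a @ [z]" using az A_def by simp
  have F: "F3 ((I',(m,\<alpha>)),(I'',(r,\<beta>))) = (1 # map uminus (rev q) @ s # r, z # rev a @ map (en I'') \<beta>)"
    unfolding F3_def Let_def using A1(2) az' by (simp add: s_def)
  show ?thesis
    apply (rule exI[of _ q], rule exI[of _ a], rule exI[of _ z], rule exI[of _ s])
    using A1 exc_rev[OF A1(3,4)] Bw az' la Aw(5) fA az D(2) F by (simp add: s_def)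
qed

lemma F3_inj: "inj_on F3 (D_set n)"
proof (rule inj_onI)
  fix x y assume x: "x \<in> D_set n" and y: "y \<in> D_set n" and e: "F3 x = F3 y"
  obtain I1 m1 \<alpha>1 J1 r1 \<beta>1 where xe: "x = ((I1,(m1,\<alpha>1)),(J1,(r1,\<beta>1)))" by (metis prod.exhaust)
  obtain I2 m2 \<alpha>2 J2 r2 \<beta>2 where ye: "y = ((I2,(m2,\<alpha>2)),(J2,(r2,\<beta>2)))" by (metis prod.exhaust)
  obtain q1 a1 z1 s1 where h1: "m1 = q1 @ [-1]" "posf 0 (map uminus (rev q1))" "sum_list (map uminus (rev q1)) = 0"
     "s1 \<in> {-1,1}" "posf 0 r1" "map (en I1) \<alpha>1 = a1 @ [z1]" "length a1 = length q1 + 1"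
     "set \<alpha>1 = {1..card I1}" "set \<beta>1 = {1..card J1}" "I1 = set (a1 @ [z1])" "J1 = {1..n} - I1"
     "F3 x = (1 # map uminus (rev q1) @ s1 # r1, z1 # rev a1 @ map (en J1) \<beta>1)"
    using F3_facts[of I1 m1 \<alpha>1 J1 r1 \<beta>1 n] x xe by auto
  obtain q2 a2 z2 s2 where h2: "m2 = q2 @ [-1]" "posf 0 (map uminus (rev q2))" "sum_list (map uminus (rev q2)) = 0"
     "s2 \<in> {-1,1}" "posf 0 r2" "map (en I2) \<alpha>2 = a2 @ [z2]" "length a2 = length q2 + 1"
     "set \<alpha>2 = {1..card I2}" "set \<beta>2 = {1..card J2}" "I2 = set (a2 @ [z2])" "J2 = {1..n} - I2"
     "F3 y = (1 # map uminus (rev q2) @ s2 # r2, z2 # rev a2 @ map (en J2) \<beta>2)"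
    using F3_facts[of I2 m2 \<alpha>2 J2 r2 \<beta>2 n] y ye by auto
  have pe: "map uminus (rev q1) @ s1 # r1 = map uminus (rev q2) @ s2 # r2"
    and se: "z1 # rev a1 @ map (en J1) \<beta>1 = z2 # rev a2 @ map (en J2) \<beta>2"
    using e h1(12) h2(12) by auto
  have Qe: "map uminus (rev q1) = map uminus (rev q2)"
    using decomp_unique[OF pe] h1 h2 by blast
  then have qe: "q1 = q2" by (metis neg_neg_rev)
  have sr: "s1 = s2" "r1 = r2" using pe Qe by auto
  have "length (rev a1) = length (rev a2)" using h1(7) h2(7) qe by simp
  then have ze: "z1 = z2" "a1 = a2" "map (en J1) \<beta>1 = map (en J2) \<beta>2"
    using se by auto
  have Ie: "I1 = I2" "J1 = J2" using h1(10,11) h2(10,11) ze by auto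
  have "\<alpha>1 = \<alpha>2" using map_en_inj[of \<alpha>1 I1 \<alpha>2] h1(6,8) h2(6,8) ze Ie by simp
  moreover have "\<beta>1 = \<beta>2" using map_en_inj[of \<beta>1 J1 \<beta>2] h1(9) h2(9) ze Ie by simp
  ultimately show "x = y" using xe ye qe h1(1) h2(1) sr Ie by simp
qed



lemma F3_surj: "B''_set n \<subseteq> F3 ` D_set n"
proof
  fix x assume x: "x \<in> B''_set n"
  obtain p \<sigma> where xe: "x = (p,\<sigma>)" by (cases x)
  obtain q0 where h: "well_labelled n (p,\<sigma>)" "n \<ge> 2" "p = 1 # q0" "posf 1 q0"
     "\<not> (posf 0 q0 \<and> sum_list q0 = 0)" using x xe by (auto simp: B''_char)
  have wl: "length q0 = n - 2" "set q0 \<subseteq> {-1,0,1}" "length \<sigma> = n"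
    "distinct \<sigma>" "set \<sigma> = {1..n}" "okc (1#q0) \<sigma>" using h by (auto simp: wl_okc)
  obtain u s r where d: "q0 = u @ s # r" "posf 0 u" "sum_list u = 0" "s \<in> {-1,1}" "posf 0 r"
    using decomp[OF h(4,5) wl(2)] by blast
  obtain z w where zw: "\<sigma> = z # w" using wl h(2) by (cases \<sigma>) auto
  have lw: "length w = length u + 1 + (length r + 1)" using wl zw d h(2) by simp
  define a' where "a' = take (length u + 1) w"
  define B where "B = drop (length u + 1) w"
  have wab: "w = a' @ B" by (simp add: a'_def B_def)
  have la: "length a' = length u + 1" "length B = length r + 1" using lw by (auto simp: a'_def B_def)
  obtain c t where ct: "B = c # t" using la by (cases B) auto
  have ane: "a' \<noteq> []" using la by auto
  have ok1: "okc (1 # (u @ s # r)) (z # (a' @ c # t))" using wl(6) d zw wab ct by simp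
  have "a' @ c # t \<noteq> []" by simp
  then have "rel 1 z (hd a') \<and> okc (u @ s # r) (a' @ c # t)"
    using okc_cons[of "a' @ c # t" 1 "u @ s # r" z] ok1 ane by simp
  then have o: "rel 1 z (hd a')" "okc u a'" "rel s (last a') c" "okc r (c # t)"
    using okc_app[OF la(1)] by auto
  define A where "A = rev a' @ [z]"
  define I' where "I' = set A"
  define I'' where "I'' = set B"
  have dA: "distinct A" "distinct B" "set A \<inter> set B = {}" using wl(4) zw wab by (auto simp: A_def)
  have un: "set A \<union> set B = {1..n}" using wl(5) zw wab by (auto simp: A_def)
  have cI: "card I' = length u + 2" "card I'' = length r + 1"
    using distinct_card[OF dA(1)] distinct_card[OF dA(2)] la by (auto simp: I'_def I''_def A_def)
  have fI: "finite I'" "finite I''" by (auto simp: I'_def I''_def)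
  define \<alpha> where "\<alpha> = map (inv_into {1..card I'} (en I')) A"
  define \<beta> where "\<beta> = map (inv_into {1..card I''} (en I'')) B"
  have ea: "distinct \<alpha> \<and> set \<alpha> = {1..card I'} \<and> map (en I') \<alpha> = A \<and> length \<alpha> = length A"
    using en_bwd[OF fI(1) dA(1)] unfolding \<alpha>_def I'_def by blast
  have eb: "distinct \<beta> \<and> set \<beta> = {1..card I''} \<and> map (en I'') \<beta> = B \<and> length \<beta> = length B"
    using en_bwd[OF fI(2) dA(2)] unfolding \<beta>_def I''_def by blast
  define U where "U = map uminus (rev u)"
  define m where "m = U @ [-1]"
  have exU: "posf 0 U" "sum_list U = 0" using exc_rev[OF d(2,3)] by (auto simp: U_def)
  have lU: "length (rev a') = length U + 1" using la by (simp add: U_def)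
  have okA: "okc m A"
  proof -
    have "okc U (rev a')" using okc_rev[OF la(1)] o(2) by (simp add: U_def)
    moreover have "rel (-1) (last (rev a')) z" using o(1) rel_neg[of 1 "hd a'" z] ane
      by (simp add: last_rev)
    ultimately show ?thesis unfolding m_def A_def using okc_snoc[OF lU] by simp
  qed
  have okA': "okc m \<alpha>" using okA en_fwd[OF fI(1), of \<alpha>] ea by auto
  have su: "set u \<subseteq> {-1,0,1}" "set r \<subseteq> {-1,0,1}" using wl(2) d(1) by auto
  have "well_labelled (card I') (m,\<alpha>)" unfolding wl_okc
    using cI ea okA' su(1) la by (auto simp: m_def U_def A_def)
  then have inA: "(m,\<alpha>) \<in> A_set (card I')" unfolding A_char m_def using exU by blast
  have okB': "okc r \<beta>" using o(4) ct en_fwd[OF fI(2), of \<beta>] eb by auto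
  have "well_labelled (card I'') (r,\<beta>)" unfolding wl_okc
    using cI eb okB' su(2) la by auto
  then have inB: "(r,\<beta>) \<in> B_set (card I'')" unfolding B_char using d(5) by simp
  have subs: "I' \<subseteq> {1..n}" "I'' = {1..n} - I'" using un dA(3) by (auto simp: I'_def I''_def)
  have inD: "((I',(m,\<alpha>)),(I'',(r,\<beta>))) \<in> D_set n" unfolding D_char using subs inA inB by blast
  have sv: "(if hd (rev a') < hd B then -1 else (1::int)) = s"
    using o(3) d(4) ane ct by (auto simp: rel_def hd_rev)
  have "F3 ((I',(m,\<alpha>)),(I'',(r,\<beta>))) = (1 # map uminus (rev U) @ s # r, z # rev (rev a') @ B)"
    unfolding F3_def Let_def using ea eb sv by (simp add: m_def A_def)
  also have "\<dots> = x" using xe h(3) d(1) zw wab by (simp add: U_def neg_neg_rev)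
  finally show "x \<in> F3 ` D_set n" using inD by force
qed

theorem proposition3:
  fixes n :: nat
  assumes "n \<ge> 1"
  shows "(\<exists>f. bij_betw f (B0_set n) ({1..n} \<times> B_set (n - 1)))
       \<and> (\<exists>g. bij_betw g (B'_set n) (A_set n))
       \<and> (\<exists>h. bij_betw h (B''_set n) (D_set n))"
proof (intro conjI)
  show "\<exists>f. bij_betw f (B0_set n) ({1..n} \<times> B_set (n - 1))"
    using bij_betw_inv_into[OF part1] by blast
  show "\<exists>g. bij_betw g (B'_set n) (A_set n)"
    using bij_betw_inv_into[OF part2] by blast
  have sub: "F3 ` D_set n \<subseteq> B''_set n"
  proof (rule image_subsetI)
    fix x assume x: "x \<in> D_set n"
    obtain I' m \<alpha> I'' r \<beta> where xe: "x = ((I',(m,\<alpha>)),(I'',(r,\<beta>)))" by (metis prod.exhaust)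
    show "F3 x \<in> B''_set n" using F3_into[of I' m \<alpha> I'' r \<beta> n] x xe by simp
  qed
  have "F3 ` D_set n = B''_set n" using sub F3_surj by (rule equalityI)
  then have "bij_betw F3 (D_set n) (B''_set n)"
    unfolding bij_betw_def using F3_inj by blast
  then show "\<exists>h. bij_betw h (B''_set n) (D_set n)"
    using bij_betw_inv_into by blast
qed


end
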